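(* Let $N\ge 1$ be an integer and $h,g>0$ real numbers. For $k\in\{0,1,\dots,N\}$ and $\Delta>0$ define $$R_k(\Delta):=\log\Big(1+(N-k)\frac{h^2}{1+\Delta}\Big)+\log(1+kg^2)-k\log\Big(\frac{1+\Delta}{\Delta}\Big)$$ (logarithms base $2$). For $i\in\{0,\dots,N-1\}$ let $\Delta^*_{(i)(i+1)}$ be the unique positive solution of $R_i(\Delta)=R_{i+1}(\Delta)$. Then $\Delta^*_{(i)(i+1)}$ is non-decreasing in $i$, i.e. $\Delta^*_{01}\le\Delta^*_{12}\le\cdots\le\Delta^*_{(N-1)(N)}$.
   Context: $R_k(\Delta)$ is the quantize-map-and-forward rate of a cut containing $k$ relays in the symmetric $N$-relay diamond network (all source-relay magnitudes equal $h$, all relay-destination magnitudes equal $g$) when every relay uses Gaussian quantization distortion $\Delta$. The equation $R_i(\Delta)=R_{i+1}(\Delta)$ has exactly one positive solution for each $i$. *)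

theory Defs
  imports Complex_Main
begin

text \<open>QMF rate of a cut with k relays in the symmetric N-relay diamond network,
  with Gaussian quantization distortion D (logarithms base 2).\<close>
definition qmf_rate :: "nat \<Rightarrow> real \<Rightarrow> real \<Rightarrow> nat \<Rightarrow> real \<Rightarrow> real" where
  "qmf_rate N h g k D =
     log 2 (1 + (real N - real k) * (h^2 / (1 + D))) + log 2 (1 + real k * g^2)
     - real k * log 2 ((1 + D) / D)"

definition qmf_cross :: "nat \<Rightarrow> real \<Rightarrow> real \<Rightarrow> nat \<Rightarrow> real" where
  "qmf_cross N h g i = (THE D. D > 0 \<and> qmf_rate N h g i D = qmf_rate N h g (Suc i) D)"

end

theory Submission
  imports Defs
begin

definition ff :: "real \<Rightarrow> real \<Rightarrow> real \<Rightarrow> real" where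
  "ff h m D = (1 + h^2 / (1 + D + (m - 1) * h^2)) * (1 + 1 / D)"

definition cc :: "real \<Rightarrow> nat \<Rightarrow> real" where
  "cc g i = 1 + g^2 / (1 + real i * g^2)"

lemma logdiv: "(x::real) > 0 \<Longrightarrow> y > 0 \<Longrightarrow> log 2 (x / y) = log 2 x - log 2 y"
  by (simp add: log_divide)

lemma rate_eq_iff:
  assumes h: "h > 0" and g: "g > 0" and D: "D > 0" and i: "i < N"
  shows "qmf_rate N h g i D = qmf_rate N h g (Suc i) D \<longleftrightarrow> ff h (real N - real i) D = cc g i"
proof -
  define m where "m = real N - real i"
  have m1: "m \<ge> 1" using i by (simp add: m_def)
  define a where "a = h^2 / (1 + D)"
  have a: "a > 0" using h D by (simp add: a_def)
  have p1: "1 + m * a > 0" using m1 a by (smt (verit) mult_pos_pos)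
  have p2: "1 + (m - 1) * a > 0" using m1 a by (smt (verit) mult_nonneg_nonneg)
  have p3: "1 + real i * g^2 > 0" by (simp add: add_pos_nonneg)
  have p4: "1 + real (Suc i) * g^2 > 0" by (simp add: add_pos_nonneg)
  have p5: "(1 + D) / D > 0" using D by simp
  have e1: "real N - real (Suc i) = m - 1" by (simp add: m_def)
  have "qmf_rate N h g i D - qmf_rate N h g (Suc i) D =
     log 2 (1 + m * a) - log 2 (1 + (m - 1) * a) + log 2 ((1 + D) / D)
     - (log 2 (1 + real (Suc i) * g^2) - log 2 (1 + real i * g^2))"
    unfolding qmf_rate_def e1 by (simp add: m_def a_def algebra_simps)
  also have "\<dots> = log 2 ((1 + m * a) / (1 + (m - 1) * a) * ((1 + D) / D))
      - log 2 ((1 + real (Suc i) * g^2) / (1 + real i * g^2))"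
  proof -
    have "log 2 ((1 + m * a) / (1 + (m - 1) * a) * ((1 + D) / D)) =
        log 2 (1 + m * a) - log 2 (1 + (m - 1) * a) + log 2 ((1 + D) / D)"
      using p1 p2 p5 D by (simp add: log_mult log_divide del: divide_divide_eq_left)
    moreover have "log 2 ((1 + real (Suc i) * g^2) / (1 + real i * g^2)) =
        log 2 (1 + real (Suc i) * g^2) - log 2 (1 + real i * g^2)"
      by (rule logdiv[OF p4 p3])
    ultimately show ?thesis by simp
  qed
  finally have diff: "qmf_rate N h g i D - qmf_rate N h g (Suc i) D =
      log 2 ((1 + m * a) / (1 + (m - 1) * a) * ((1 + D) / D))
      - log 2 ((1 + real (Suc i) * g^2) / (1 + real i * g^2))" .
  have r1: "(1 + m * a) / (1 + (m - 1) * a) * ((1 + D) / D) = ff h m D"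
      proof -
    have q1: "1 + D + (m - 1) * h^2 > 0" using D m1 h by (smt (verit) mult_nonneg_nonneg zero_le_power2)
    have "(1 + m * a) / (1 + (m - 1) * a) = 1 + h^2 / (1 + D + (m - 1) * h^2)"
    proof -
      have e1: "1 + m * a = (1 + D + m * h^2) / (1 + D)" unfolding a_def using D by (simp add: field_simps)
      have e2: "1 + (m - 1) * a = (1 + D + (m - 1) * h^2) / (1 + D)" unfolding a_def using D by (simp add: field_simps)
      have "(1 + m * a) / (1 + (m - 1) * a) = (1 + D + m * h^2) / (1 + D + (m - 1) * h^2)"
        unfolding e1 e2 using D q1 by simp
      also have "\<dots> = 1 + h^2 / (1 + D + (m - 1) * h^2)"
        using q1 by (simp add: field_simps)
      finally show ?thesis .
    qed
    moreover have "(1 + D) / D = 1 + 1 / D" using D by (simp add: field_simps)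
    ultimately show ?thesis unfolding ff_def by simp
  qed
  have r2: "(1 + real (Suc i) * g^2) / (1 + real i * g^2) = cc g i"
    unfolding cc_def using p3 by (simp add: field_simps)
  have fpos: "ff h m D > 0" using r1 p1 p2 p5 by (metis divide_pos_pos mult_pos_pos)
  have cpos: "cc g i > 0" using r2 p3 p4 by (metis divide_pos_pos)
  have "qmf_rate N h g i D = qmf_rate N h g (Suc i) D \<longleftrightarrow> log 2 (ff h m D) = log 2 (cc g i)"
    using diff unfolding r1 r2 by linarith
  also have "\<dots> \<longleftrightarrow> ff h m D = cc g i" using fpos cpos log_inj[of 2] by (auto simp: inj_on_def)
  finally show ?thesis by (simp add: m_def)
qed

lemma ff_first_pos:
  fixes m h D :: real
  assumes "m \<ge> 1" "h > 0" "D > 0"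
  shows "1 + D + (m - 1) * h^2 > 0"
proof -
  have "(m - 1) * h^2 \<ge> 0" using assms by (intro mult_nonneg_nonneg) auto
  then show ?thesis using assms by linarith
qed

lemma ff_strict_dec:
  assumes m: "m \<ge> 1" and h: "h > 0" and D: "0 < D" and DE: "D < E"
  shows "ff h m E < ff h m D"
proof -
  have E: "E > 0" using D DE by simp
  have q1: "1 + D + (m - 1) * h^2 > 0" using ff_first_pos[OF m h D] .
  have q2: "1 + E + (m - 1) * h^2 > 0" using ff_first_pos[OF m h E] .
  have a: "h^2 / (1 + E + (m - 1) * h^2) \<le> h^2 / (1 + D + (m - 1) * h^2)"
    using q1 q2 DE by (intro divide_left_mono) auto
  have b: "1 / E < 1 / D" using D DE by (simp add: divide_strict_left_mono)
  have p: "0 \<le> h^2 / (1 + E + (m - 1) * h^2)" using q2 by simp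
  have "ff h m E = (1 + h^2 / (1 + E + (m - 1) * h^2)) * (1 + 1 / E)" by (simp add: ff_def)
  also have "\<dots> \<le> (1 + h^2 / (1 + D + (m - 1) * h^2)) * (1 + 1 / E)"
    using a E by (intro mult_right_mono) auto
  also have "\<dots> < (1 + h^2 / (1 + D + (m - 1) * h^2)) * (1 + 1 / D)"
    using b p a by (intro mult_strict_left_mono) auto
  finally show ?thesis by (simp add: ff_def)
qed

lemma ff_anti_m:
  assumes m: "1 \<le> m'" "m' \<le> m" and h: "h > 0" and D: "D > 0"
  shows "ff h m D \<le> ff h m' D"
proof -
  have q1: "1 + D + (m' - 1) * h^2 > 0" using ff_first_pos[OF m(1) h D] .
  have q0: "(m' - 1) * h^2 \<le> (m - 1) * h^2" using m by (intro mult_right_mono) auto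
  have a: "h^2 / (1 + D + (m - 1) * h^2) \<le> h^2 / (1 + D + (m' - 1) * h^2)"
    using q1 q0 by (intro divide_left_mono) auto
  show ?thesis unfolding ff_def using a D by (intro mult_right_mono) auto
qed

lemma ff_ge: assumes "m \<ge> 1" "h > 0" "D > 0" shows "ff h m D \<ge> 1 + 1 / D"
proof -
  have "0 \<le> h^2 / (1 + D + (m - 1) * h^2)" using ff_first_pos[OF assms] by simp
  moreover have "1 + 1 / D > 0" using assms(3) by (simp add: add_pos_pos)
  ultimately have "0 \<le> h^2 / (1 + D + (m - 1) * h^2) * (1 + 1 / D)" by (meson mult_nonneg_nonneg less_imp_le)
  then show ?thesis unfolding ff_def by (simp add: algebra_simps)
qed

lemma ff_le: assumes "m \<ge> 1" "h > 0" "D > 0" shows "ff h m D \<le> (1 + h^2 / D) * (1 + 1 / D)"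
proof -
  have q: "1 + D + (m - 1) * h^2 \<ge> D" using assms by (smt (verit) mult_nonneg_nonneg zero_le_power2)
  have "h^2 / (1 + D + (m - 1) * h^2) \<le> h^2 / D"
    using q assms ff_first_pos[OF assms] by (intro divide_left_mono) (auto intro!: mult_pos_pos)
  then show ?thesis unfolding ff_def using assms(3) by (intro mult_right_mono) auto
qed

lemma ff_cont: assumes "m \<ge> 1" "h > 0" "D > 0" shows "isCont (ff h m) D"
proof -
  have q: "1 + D + (m - 1) * h^2 > 0" using ff_first_pos[OF assms] by simp
  have q2: "(1 + D + (m - 1) * h^2) * D > 0" using q assms(3) by simp
  show ?thesis unfolding ff_def[abs_def] using q q2 assms(3) by (intro continuous_intros) auto
qed

lemma ff_exists:
  assumes m: "m \<ge> 1" and h: "h > 0" and c: "c > 1"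
  shows "\<exists>D>0. ff h m D = c"
proof -
  define D0 where "D0 = 1 / c"
  define D1 where "D1 = max 1 ((2 * h^2 + 1) / (c - 1))"
  have D0: "D0 > 0" using c by (simp add: D0_def)
  have D1: "D1 \<ge> 1" by (simp add: D1_def)
  have f0: "ff h m D0 \<ge> c"
    using ff_ge[OF m h D0] c by (simp add: D0_def)
  have "(2 * h^2 + 1) / D1 \<le> c - 1"
  proof -
    have "(2 * h^2 + 1) / (c - 1) \<le> D1" by (simp add: D1_def)
    then have "2 * h^2 + 1 \<le> D1 * (c - 1)" using c by (simp add: field_simps)
    then show ?thesis using D1 by (simp add: field_simps)
  qed
  moreover have "(1 + h^2 / D1) * (1 + 1 / D1) \<le> 1 + (2 * h^2 + 1) / D1"
  proof -
    have "D1 \<le> D1 * D1" using D1 by (simp add: mult_le_cancel_left1)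
    then have "h^2 / (D1 * D1) \<le> h^2 / D1" using D1 by (intro divide_left_mono) auto
    then have "h^2 / D1 * (1 / D1) \<le> h^2 / D1" by simp
    then show ?thesis by (simp add: algebra_simps add_divide_distrib)
  qed
  ultimately have f1: "ff h m D1 \<le> c" using ff_le[OF m h] D1 by (smt (verit))
  have le: "D0 \<le> D1"
  proof (rule ccontr)
    assume "\<not> D0 \<le> D1"
    then have "ff h m D0 < ff h m D1" using ff_strict_dec[OF m h] D1 by simp
    then show False using f0 f1 by simp
  qed
  have "\<exists>x. D0 \<le> x \<and> x \<le> D1 \<and> ff h m x = c"
    using f0 f1 le D0 by (intro IVT2) (auto intro!: ff_cont[OF m h])
  then obtain x where "D0 \<le> x" "ff h m x = c" by blast
  then show ?thesis using D0 by (intro exI[of _ x]) auto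
qed

lemma cc_gt: "g > 0 \<Longrightarrow> cc g i > 1"
  unfolding cc_def by (simp add: add_pos_nonneg)

lemma cc_anti: assumes "g > 0" "i \<le> j" shows "cc g j \<le> cc g i"
proof -
  have "1 + real i * g^2 \<le> 1 + real j * g^2" using assms by (simp add: mult_right_mono)
  then show ?thesis unfolding cc_def using assms
    by (intro add_left_mono divide_left_mono) (auto simp: add_pos_nonneg)
qed

lemma cross_prop:
  assumes h: "h > 0" and g: "g > 0" and i: "i < N"
  shows "qmf_cross N h g i > 0 \<and> ff h (real N - real i) (qmf_cross N h g i) = cc g i"
proof -
  let ?m = "real N - real i"
  have m: "?m \<ge> 1" using i by simp
  have ex: "\<exists>!D. D > 0 \<and> qmf_rate N h g i D = qmf_rate N h g (Suc i) D"
  proof -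
    obtain D where D: "D > 0" "ff h ?m D = cc g i" using ff_exists[OF m h cc_gt[OF g]] by blast
    show ?thesis
    proof (rule ex1I[of _ D])
      show "D > 0 \<and> qmf_rate N h g i D = qmf_rate N h g (Suc i) D"
        using D rate_eq_iff[OF h g D(1) i] by simp
    next
      fix E assume E: "E > 0 \<and> qmf_rate N h g i E = qmf_rate N h g (Suc i) E"
      then have fE: "ff h ?m E = cc g i" using rate_eq_iff[OF h g _ i] by blast
      show "E = D"
      proof (rule ccontr)
        assume "E \<noteq> D"
        then consider "E < D" | "D < E" by linarith
        then show False
          using ff_strict_dec[OF m h] D E fE by cases fastforce+
      qed
    qed
  qed
  have "qmf_cross N h g i > 0 \<and> qmf_rate N h g i (qmf_cross N h g i) = qmf_rate N h g (Suc i) (qmf_cross N h g i)"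
    unfolding qmf_cross_def by (rule theI'[OF ex])
  then show ?thesis using rate_eq_iff[OF h g _ i] by blast
qed

theorem lemma4:
  fixes N :: nat and h g :: real
  assumes "N \<ge> 1" and "h > 0" and "g > 0"
  shows "mono_on {..<N} (qmf_cross N h g)"
proof (rule mono_onI)
  fix i j assume i: "i \<in> {..<N}" and j: "j \<in> {..<N}" and ij: "i \<le> j"
  define Di where "Di = qmf_cross N h g i"
  define Dj where "Dj = qmf_cross N h g j"
  have Pi: "Di > 0" "ff h (real N - real i) Di = cc g i" using cross_prop[OF assms(2,3)] i by (auto simp: Di_def)
  have Pj: "Dj > 0" "ff h (real N - real j) Dj = cc g j" using cross_prop[OF assms(2,3)] j by (auto simp: Dj_def)
  have mj: "real N - real j \<ge> 1" using j by auto
  have "ff h (real N - real i) Di \<le> ff h (real N - real j) Di"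
    using ff_anti_m[OF mj _ assms(2) Pi(1)] ij by simp
  moreover have "cc g j \<le> cc g i" using cc_anti[OF assms(3) ij] .
  ultimately have "ff h (real N - real j) Dj \<le> ff h (real N - real j) Di" using Pi Pj by simp
  then show "qmf_cross N h g i \<le> qmf_cross N h g j"
    using ff_strict_dec[OF mj assms(2) Pj(1)] unfolding Di_def[symmetric] Dj_def[symmetric]
    by (meson not_le)
qed

end
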